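(* Consider the online ranking game for SumLoss with top-1 feedback and $m=3$ objects. For every (possibly randomized) online learning algorithm, there is an adversary strategy generating relevance vectors $r_1,\dots,r_T\in\{0,1\}^3$ such that $$\mathbb{E}\Big[\sum_{t=1}^T SumLoss(\sigma_t,r_t)\Big]-\min_\sigma\sum_{t=1}^T SumLoss(\sigma,r_t)=\Omega(T^{2/3}),$$ where the expectation is over the learner's randomized actions $\sigma_t$.
   Context: Objects are $\{1,\dots,m\}$; a ranking is a permutation $\sigma$ of $[m]$ with $\sigma(i)$ the rank of object $i$. $SumLoss(\sigma,r)=\sum_{i=1}^m\sigma(i)r(i)$ for $r\in\{0,1\}^m$. The game runs for $T$ rounds: an oblivious adversary fixes $r_1,\dots,r_T$ in advance; at round $t$ the learner (possibly randomizing, based on past feedback) outputs $\sigma_t$, suffers $SumLoss(\sigma_t,r_t)$, and observes only $r_t(\sigma_t^{-1}(1))$, the relevance of the top-ranked object. *)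

theory Defs
  imports "HOL-Combinatorics.Permutations" "HOL-Probability.Probability_Mass_Function"
begin

text \<open>Objects are 1..m; a ranking sigma maps object i to its rank sigma i in 1..m.
  Relevance vectors are predicates r :: nat => bool (r i = relevance of object i).\<close>

type_synonym ranking = "nat \<Rightarrow> nat"
type_synonym relevance = "nat \<Rightarrow> bool"

definition rankings :: "nat \<Rightarrow> ranking set" where
  "rankings m = {\<sigma>. \<sigma> permutes {1..m}}"

definition SumLoss :: "nat \<Rightarrow> ranking \<Rightarrow> relevance \<Rightarrow> real" where
  "SumLoss m \<sigma> r = (\<Sum>i=1..m. real (\<sigma> i) * (if r i then 1 else 0))"

definition top_obj :: "nat \<Rightarrow> ranking \<Rightarrow> nat" where
  "top_obj m \<sigma> = inv_into {1..m} \<sigma> 1"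

text \<open>History seen by the learner: its own past rankings and the top-1 feedback bits.
  A (randomized) learner maps the history to a distribution of the next ranking.\<close>
type_synonym history = "(ranking \<times> bool) list"
type_synonym learner = "history \<Rightarrow> ranking pmf"

definition valid_learner :: "nat \<Rightarrow> learner \<Rightarrow> bool" where
  "valid_learner m L \<longleftrightarrow> (\<forall>h. set_pmf (L h) \<subseteq> rankings m)"

text \<open>Expected cumulative SumLoss of learner L, starting from history h, against the
  (obliviously fixed) remaining relevance sequence.\<close>
fun exp_loss :: "nat \<Rightarrow> learner \<Rightarrow> history \<Rightarrow> relevance list \<Rightarrow> real" where
  "exp_loss m L h [] = 0"
| "exp_loss m L h (r # rs) =
     measure_pmf.expectation (L h)
       (\<lambda>\<sigma>. SumLoss m \<sigma> r + exp_loss m L (h @ [(\<sigma>, r (top_obj m \<sigma>))]) rs)"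

definition regret :: "nat \<Rightarrow> learner \<Rightarrow> relevance list \<Rightarrow> real" where
  "regret m L rs = exp_loss m L [] rs
     - Min ((\<lambda>\<sigma>. \<Sum>r\<leftarrow>rs. SumLoss m \<sigma> r) ` rankings m)"

definition relevance_vec :: "nat \<Rightarrow> relevance \<Rightarrow> bool" where
  "relevance_vec m r \<longleftrightarrow> (\<forall>i. r i \<longrightarrow> i \<in> {1..m})"

end

theory Submission
  imports Defs
begin


definition XX :: relevance where "XX = (\<lambda>i. i = 1 \<or> i = 2)"
definition YY :: relevance where "YY = (\<lambda>i. i = 1 \<or> i = 3)"

definition qX :: "real \<Rightarrow> bool \<Rightarrow> real" where "qX e b = (if b then 1/2 - e else 1/2 + e)"
definition qY :: "real \<Rightarrow> bool \<Rightarrow> real" where "qY e b = (if b then 1/2 + e else 1/2 - e)"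

fun Ew :: "real \<Rightarrow> bool \<Rightarrow> nat \<Rightarrow> (relevance list \<Rightarrow> real) \<Rightarrow> real" where
  "Ew e b 0 f = f []"
| "Ew e b (Suc n) f = qX e b * Ew e b n (\<lambda>rs. f (XX # rs)) + qY e b * Ew e b n (\<lambda>rs. f (YY # rs))"

lemma q_sum: "qX e b + qY e b = 1" by (simp add: qX_def qY_def)

lemma Ew_add: "Ew e b n (\<lambda>rs. f rs + g rs) = Ew e b n f + Ew e b n g"
  by (induction n arbitrary: f g) (simp_all add: algebra_simps)

lemma Ew_cmult: "Ew e b n (\<lambda>rs. c * f rs) = c * Ew e b n f"
  by (induction n arbitrary: f) (simp_all add: algebra_simps)

lemma Ew_const: "Ew e b n (\<lambda>rs. c) = c"
proof (induction n)
  case (Suc n) then show ?case using q_sum[of e b] by (simp add: distrib_right[symmetric])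
qed simp

lemma Ew_sum: "finite S \<Longrightarrow> Ew e b n (\<lambda>rs. \<Sum>s\<in>S. k s rs) = (\<Sum>s\<in>S. Ew e b n (k s))"
  by (induction S rule: finite_induct) (simp_all add: Ew_add Ew_const)

lemma Ew_affine: "Ew e b n (\<lambda>rs. d * (c + f rs)) = d * (c + Ew e b n f)"
proof -
  have "Ew e b n (\<lambda>rs. d * (c + f rs)) = Ew e b n (\<lambda>rs. d * c + d * f rs)"
    by (simp add: algebra_simps)
  also have "\<dots> = d * c + d * Ew e b n f" by (simp add: Ew_add Ew_const Ew_cmult)
  finally show ?thesis by (simp add: algebra_simps)
qed

lemma Ew_mono: assumes "0 \<le> e" "e \<le> 1/2" shows "(\<And>rs. f rs \<le> g rs) \<Longrightarrow> Ew e b n f \<le> Ew e b n g"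
proof (induction n arbitrary: f g)
  case (Suc n)
  have "0 \<le> qX e b" "0 \<le> qY e b" using assms by (auto simp: qX_def qY_def)
  moreover have "Ew e b n (\<lambda>rs. f (XX # rs)) \<le> Ew e b n (\<lambda>rs. g (XX # rs))"
    "Ew e b n (\<lambda>rs. f (YY # rs)) \<le> Ew e b n (\<lambda>rs. g (YY # rs))" using Suc by auto
  ultimately show ?case by (simp add: add_mono mult_left_mono)
qed simp

lemma Ew_sumlist: "Ew e b n (\<lambda>rs. c + sum_list (map f rs)) = c + real n * (qX e b * f XX + qY e b * f YY)"
proof (induction n arbitrary: c)
  case (Suc n)
  have 1: "(\<lambda>rs. c + sum_list (map f (XX#rs))) = (\<lambda>rs. (c + f XX) + sum_list (map f rs))"
    "(\<lambda>rs. c + sum_list (map f (YY#rs))) = (\<lambda>rs. (c + f YY) + sum_list (map f rs))"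
    by (simp_all add: algebra_simps)
  have qq: "qY e b = 1 - qX e b" using q_sum[of e b] by simp
  show ?case unfolding Ew.simps 1 Suc qq
    by (simp add: algebra_simps)
qed simp

definition seqs :: "nat \<Rightarrow> relevance list set" where
  "seqs n = {xs. set xs \<subseteq> {XX, YY} \<and> length xs = n}"

lemma seqs_fin: "finite (seqs n)" unfolding seqs_def by (rule finite_lists_length_eq) simp

lemma seqs_ne: "seqs n \<noteq> {}" unfolding seqs_def
  by (rule ccontr) (auto dest: spec[of _ "replicate n XX"])

lemma Ew_le_Max: assumes "0 \<le> e" "e \<le> 1/2" shows "Ew e b n f \<le> Max (f ` seqs n)"
proof (induction n arbitrary: f)
  case 0
  have "[] \<in> seqs 0" by (simp add: seqs_def)
  then show ?case using seqs_fin by (simp add: Max_ge)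
next
  case (Suc n)
  have q: "0 \<le> qX e b" "0 \<le> qY e b" using assms by (auto simp: qX_def qY_def)
  have "\<And>x. x \<in> {XX,YY} \<Longrightarrow> Max ((\<lambda>rs. f (x # rs)) ` seqs n) \<le> Max (f ` seqs (Suc n))"
  proof -
    fix x assume x: "x \<in> {XX,YY}"
    have "Max ((\<lambda>rs. f (x # rs)) ` seqs n) \<in> (\<lambda>rs. f (x # rs)) ` seqs n"
      by (rule Max_in) (simp_all add: seqs_fin seqs_ne)
    then obtain rs where rs: "rs \<in> seqs n" "Max ((\<lambda>rs. f (x # rs)) ` seqs n) = f (x # rs)"
      by blast
    have "x # rs \<in> seqs (Suc n)" using rs x by (auto simp: seqs_def)
    then show "Max ((\<lambda>rs. f (x # rs)) ` seqs n) \<le> Max (f ` seqs (Suc n))"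
      using rs seqs_fin by (simp add: Max_ge)
  qed
  then have a: "Ew e b n (\<lambda>rs. f (XX # rs)) \<le> Max (f ` seqs (Suc n))"
     "Ew e b n (\<lambda>rs. f (YY # rs)) \<le> Max (f ` seqs (Suc n))"
    using Suc[of "\<lambda>rs. f (XX # rs)"] Suc[of "\<lambda>rs. f (YY # rs)"] by force+
  have "Ew e b (Suc n) f \<le> qX e b * Max (f ` seqs (Suc n)) + qY e b * Max (f ` seqs (Suc n))"
    using a q by (simp add: add_mono mult_left_mono)
  also have "\<dots> = Max (f ` seqs (Suc n))" using q_sum[of e b] by (simp add: distrib_right[symmetric])
  finally show ?case .
qed


lemma set3: "{1..3::nat} = {1,2,3}" by auto

lemma fin_rank: "finite (rankings 3)"
  unfolding rankings_def by (rule finite_permutations) simp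

lemma rank_cases:
  assumes "\<sigma> \<in> rankings 3"
  shows "(\<sigma> 1, \<sigma> 2, \<sigma> 3) \<in> {(1,2,3),(1,3,2),(2,1,3),(2,3,1),(3,1,2),(3,2,1)}"
proof -
  have p: "\<sigma> permutes {1..3}" using assms by (simp add: rankings_def)
  have r: "\<sigma> i \<in> {1,2,3}" if "i \<in> {1..3}" for i
  proof -
    have "\<sigma> i \<in> {1..3}" using permutes_in_image[OF p] that by simp
    then show ?thesis by (simp only: set3)
  qed
  have i: "inj \<sigma>" using p by (rule permutes_inj)
  have a: "\<sigma> 1 \<noteq> \<sigma> 2" "\<sigma> 1 \<noteq> \<sigma> 3" "\<sigma> 2 \<noteq> \<sigma> 3"
  proof -
    have d: "\<sigma> x \<noteq> \<sigma> y" if "x \<noteq> y" for x y using i that by (simp add: inj_eq)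
    show "\<sigma> 1 \<noteq> \<sigma> 2" "\<sigma> 1 \<noteq> \<sigma> 3" "\<sigma> 2 \<noteq> \<sigma> 3" by (rule d; simp)+
  qed
  have "\<sigma> 1 = 1 \<or> \<sigma> 1 = 2 \<or> \<sigma> 1 = 3" "\<sigma> 2 = 1 \<or> \<sigma> 2 = 2 \<or> \<sigma> 2 = 3" "\<sigma> 3 = 1 \<or> \<sigma> 3 = 2 \<or> \<sigma> 3 = 3"
    using r[of 1] r[of 2] r[of 3] by simp_all
  then show ?thesis using a by (elim disjE) simp_all
qed


lemma SL_X: "SumLoss 3 \<sigma> XX = real (\<sigma> 1) + real (\<sigma> 2)"
  unfolding SumLoss_def XX_def set3 by simp

lemma SL_Y: "SumLoss 3 \<sigma> YY = real (\<sigma> 1) + real (\<sigma> 3)"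
  unfolding SumLoss_def YY_def set3 by simp

lemma top1: assumes "\<sigma> \<in> rankings 3" "\<sigma> 1 = 1" shows "top_obj 3 \<sigma> = 1"
proof -
  have p: "\<sigma> permutes {1..3}" using assms by (simp add: rankings_def)
  show ?thesis unfolding top_obj_def
    by (rule inv_into_f_eq[OF permutes_inj_on[OF p]]) (use assms in auto)
qed

definition H :: "real \<Rightarrow> real \<Rightarrow> real" where "H x y = x * y / (x + y)"

lemma H_nonneg: "0 \<le> x \<Longrightarrow> 0 \<le> y \<Longrightarrow> 0 \<le> H x y"
  by (simp add: H_def)

lemma H_le1: assumes "0 \<le> x" "0 \<le> y" shows "H x y \<le> x"
proof (cases "x + y = 0")
  case False
  then have "x + y > 0" using assms by simp
  then show ?thesis using assms unfolding H_def by (simp add: divide_le_eq mult_left_mono)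
qed (use assms in \<open>simp add: H_def\<close>)

lemma H_le2: assumes "0 \<le> x" "0 \<le> y" shows "H x y \<le> y"
  using H_le1[of y x] assms by (simp add: H_def mult.commute add.commute)

lemma H_le4: assumes "0 \<le> x" "0 \<le> y" shows "H x y \<le> (x + y) / 4"
proof (cases "x + y = 0")
  case False
  then have "x + y > 0" using assms by simp
  moreover have "4 * (x * y) \<le> (x + y) * (x + y)" using sum_squares_ge_zero[of "x - y" 0]
    by (simp add: algebra_simps power2_eq_square)
  ultimately show ?thesis unfolding H_def by (simp add: divide_le_eq)
qed (use assms in \<open>simp add: H_def\<close>)



lemma H_split:
  assumes x: "0 \<le> x" and y: "0 \<le> y" and e: "0 \<le> e" "e < 1/2"
  shows "(1 - 4*e^2) * H x y \<le> H (x*(1/2+e)) (y*(1/2-e)) + H (x*(1/2-e)) (y*(1/2+e))"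
proof (cases "x = 0 \<or> y = 0")
  case True then show ?thesis by (auto simp: H_def)
next
  case False
  then have xp: "x > 0" and yp: "y > 0" using x y by auto
  define a where "a = 1/2 + e"
  define b where "b = 1/2 - e"
  have ap: "a > 0" and bp: "b > 0" using e by (auto simp: a_def b_def)
  define D1 where "D1 = x*a + y*b"
  define D2 where "D2 = x*b + y*a"
  have d1: "D1 > 0" and d2: "D2 > 0" using xp yp ap bp by (auto simp: D1_def D2_def add_pos_pos)
  have sum: "D1 + D2 = x + y" by (simp add: D1_def D2_def a_def b_def algebra_simps)
  have L: "H (x*a) (y*b) + H (x*b) (y*a) = x*y*a*b*(x+y) / (D1*D2)"
  proof -
    have 1: "H (x*a) (y*b) = x*y*a*b / D1" by (simp add: H_def D1_def mult_ac)
    have 2: "H (x*b) (y*a) = x*y*a*b / D2" by (simp add: H_def D2_def mult_ac add.commute)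
    have "x*y*a*b / D1 + x*y*a*b / D2 = x*y*a*b*(D1+D2) / (D1*D2)"
      using d1 d2 by (simp add: field_simps)
    then show ?thesis using 1 2 sum by simp
  qed
  have prod: "D1*D2 \<le> (x+y)^2/4"
  proof -
    have "4*(D1*D2) \<le> (D1+D2)^2" using sum_squares_ge_zero[of "D1 - D2" 0]
      by (simp add: algebra_simps power2_eq_square)
    then show ?thesis using sum by simp
  qed
  have pos: "0 \<le> x*y*a*b*(x+y)" using xp yp ap bp by simp
  have "x*y*a*b*(x+y) / ((x+y)^2/4) \<le> x*y*a*b*(x+y) / (D1*D2)"
    by (rule divide_left_mono[OF prod pos]) (use d1 d2 xp yp in simp)
  moreover have "x*y*a*b*(x+y) / ((x+y)^2/4) = (1 - 4*e^2) * H x y"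
  proof -
    have ab: "4*a*b = 1 - 4*e^2" by (simp add: a_def b_def algebra_simps power2_eq_square)
    have aux: "pp*uu/(uu^2/4) = 4*pp/uu" if "uu > 0" for pp uu :: real
      using that by (simp add: field_simps power2_eq_square)
    have "x*y*a*b*(x+y) / ((x+y)^2/4) = 4*(x*y*a*b)/(x+y)"
      using aux[of "x+y" "x*y*a*b"] xp yp by simp
    also have "\<dots> = (4*a*b) * (x*y/(x+y))" by (simp add: mult_ac)
    finally have "x*y*a*b*(x+y) / ((x+y)^2/4) = (4*a*b) * (x*y/(x+y))" .
    then show ?thesis using ab by (simp add: H_def)
  qed
  ultimately show ?thesis using L by (simp add: a_def b_def)
qed

lemma exp_step:
  assumes vl: "valid_learner 3 L"
  shows "Ew e b (Suc n) (exp_loss 3 L h) =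
    (\<Sum>\<sigma>\<in>rankings 3. pmf (L h) \<sigma> *
       (qX e b * (SumLoss 3 \<sigma> XX + Ew e b n (exp_loss 3 L (h @ [(\<sigma>, XX (top_obj 3 \<sigma>))])))
      + qY e b * (SumLoss 3 \<sigma> YY + Ew e b n (exp_loss 3 L (h @ [(\<sigma>, YY (top_obj 3 \<sigma>))])))))"
proof -
  have sub: "set_pmf (L h) \<subseteq> rankings 3" using vl by (simp add: valid_learner_def)
  have el: "exp_loss 3 L h (r # rs) = (\<Sum>\<sigma>\<in>rankings 3. pmf (L h) \<sigma> *
      (SumLoss 3 \<sigma> r + exp_loss 3 L (h @ [(\<sigma>, r (top_obj 3 \<sigma>))]) rs))" for r rs
    by (simp, subst integral_measure_pmf[OF fin_rank]) (use sub in auto)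
  have E: "Ew e b n (\<lambda>rs. exp_loss 3 L h (r # rs)) = (\<Sum>\<sigma>\<in>rankings 3. pmf (L h) \<sigma> *
      (SumLoss 3 \<sigma> r + Ew e b n (exp_loss 3 L (h @ [(\<sigma>, r (top_obj 3 \<sigma>))]))))" for r
    unfolding el by (simp add: Ew_sum[OF fin_rank] Ew_affine)
  show ?thesis unfolding Ew.simps E
    by (simp add: sum_distrib_left sum.distrib algebra_simps)
qed


lemma combine:
  fixes w0 w1 e n gn gs HH HX HY PX PY C :: real
  assumes cost: "(w0+w1)*(4-2*e) \<le> C"
  and ihX: "(w0*(1/2+e)+w1*(1/2-e))*n*(7/2-e) + gn*HX \<le> PX"
  and ihY: "(w0*(1/2-e)+w1*(1/2+e))*n*(7/2-e) + gn*HY \<le> PY"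
  and sp2: "gn*((1-4*e^2)*HH) \<le> gn*(HX+HY)"
  and dd: "(gs-gn)*HH \<le> 2*e*HH"
  and g4: "4*e^2*gn*HH \<le> 1*HH"
  and h4: "(2*e+1)*HH \<le> (2*e+1)*((w0+w1)/4)"
  and we: "(2*e+1)*((w0+w1)/4) \<le> (w0+w1)*(1/2-e)"
  shows "(w0+w1)*(n+1)*(7/2-e) + gs*HH \<le> C + PX + PY"
proof -
  have a: "(w0*(1/2+e)+w1*(1/2-e))*n*(7/2-e) + (w0*(1/2-e)+w1*(1/2+e))*n*(7/2-e) = (w0+w1)*n*(7/2-e)"
    by (simp add: algebra_simps)
  have b: "gn*((1-4*e^2)*HH) = gn*HH - 4*e^2*gn*HH" by (simp add: algebra_simps)
  have c: "gn*(HX+HY) = gn*HX + gn*HY" by (simp add: algebra_simps)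
  have d: "(gs-gn)*HH = gs*HH - gn*HH" by (simp add: algebra_simps)
  have f: "(2*e+1)*HH = 2*e*HH + HH" by (simp add: algebra_simps)
  have g: "(w0+w1)*(4-2*e) = (w0+w1)*(7/2-e) + (w0+w1)*(1/2-e)" by (simp add: field_simps)
  have h: "(w0+w1)*(n+1)*(7/2-e) = (w0+w1)*n*(7/2-e) + (w0+w1)*(7/2-e)" by (simp add: algebra_simps)
  show ?thesis using assms a b c d f g h by linarith
qed


lemma main:
  fixes e G :: real
  assumes vl: "valid_learner 3 L" and e0: "0 \<le> e" and e1: "e \<le> 1/6"
    and G0: "0 \<le> G" and G1: "4*e^2*G \<le> 1"
  shows "\<forall>h w0 w1. 0 \<le> w0 \<longrightarrow> 0 \<le> w1 \<longrightarrow>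
     (w0+w1)*real n*(7/2-e) + min (2*e*real n) G * H w0 w1
       \<le> w0 * Ew e False n (exp_loss 3 L h) + w1 * Ew e True n (exp_loss 3 L h)"
proof (induction n)
  case 0
  then show ?case using G0 by simp
next
  case (Suc n)
  define gn where "gn = min (2*e*real n) G"
  define gs where "gs = min (2*e*real (Suc n)) G"
  have gn0: "0 \<le> gn" "gn \<le> G" using G0 e0 by (auto simp: gn_def)
  have gd: "gs - gn \<le> 2*e" "gn \<le> gs" using e0 by (auto simp: gn_def gs_def algebra_simps)
  define A where "A b h' = Ew e b n (exp_loss 3 L h')" for b h'
  have IH: "(w0+w1)*real n*(7/2-e) + gn * H w0 w1 \<le> w0 * A False h' + w1 * A True h'"
    if "0 \<le> w0" "0 \<le> w1" for w0 w1 h'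
    using Suc that unfolding gn_def A_def by blast
  show ?case
  proof (intro allI impI)
    fix h :: history and w0 w1 :: real
    assume w0: "0 \<le> w0" and w1: "0 \<le> w1"
    define hX where "hX \<sigma> = h @ [(\<sigma>, XX (top_obj 3 \<sigma>))]" for \<sigma>
    define hY where "hY \<sigma> = h @ [(\<sigma>, YY (top_obj 3 \<sigma>))]" for \<sigma>
    define F where "F b \<sigma> = qX e b * (SumLoss 3 \<sigma> XX + A b (hX \<sigma>))
        + qY e b * (SumLoss 3 \<sigma> YY + A b (hY \<sigma>))" for b \<sigma>
    define R0 where "R0 = (w0+w1)*real (Suc n)*(7/2-e) + gs * H w0 w1"
    have Hb: "0 \<le> H w0 w1" "H w0 w1 \<le> w0" "H w0 w1 \<le> w1" "H w0 w1 \<le> (w0+w1)/4"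
      using w0 w1 H_nonneg H_le1 H_le2 H_le4 by auto
    have per: "R0 \<le> w0 * F False \<sigma> + w1 * F True \<sigma>" if s: "\<sigma> \<in> rankings 3" for \<sigma>
    proof (cases "\<sigma> 1 = 1")
      case True
      have t: "top_obj 3 \<sigma> = 1" using top1[OF s True] .
      have hh: "hX \<sigma> = hY \<sigma>" unfolding hX_def hY_def t by (simp add: XX_def YY_def)
      have ih: "(w0+w1)*real n*(7/2-e) + gn * H w0 w1 \<le> w0 * A False (hX \<sigma>) + w1 * A True (hX \<sigma>)"
        using IH[OF w0 w1] .
      have dd: "(gs - gn) * H w0 w1 \<le> 2*e * H w0 w1" using gd Hb by (simp add: mult_right_mono)
      have c: "(\<sigma> 2 = 2 \<and> \<sigma> 3 = 3) \<or> (\<sigma> 2 = 3 \<and> \<sigma> 3 = 2)" using rank_cases[OF s] True by auto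
      have ew: "2*e*H w0 w1 \<le> 2*e*w1" "2*e*H w0 w1 \<le> 2*e*w0" using Hb e0 by (simp_all add: mult_left_mono)
      have "w0 * F False \<sigma> + w1 * F True \<sigma> =
          w0*((1/2+e)*SumLoss 3 \<sigma> XX + (1/2-e)*SumLoss 3 \<sigma> YY)
        + w1*((1/2-e)*SumLoss 3 \<sigma> XX + (1/2+e)*SumLoss 3 \<sigma> YY)
        + (w0 * A False (hX \<sigma>) + w1 * A True (hX \<sigma>))"
        unfolding F_def hh qX_def qY_def by (simp add: algebra_simps)
      then show ?thesis using c ih dd ew unfolding R0_def SL_X SL_Y True
        by (auto simp: algebra_simps)
    next
      case False
      have ihX: "(w0*(1/2+e)+w1*(1/2-e))*real n*(7/2-e) + gn * H (w0*(1/2+e)) (w1*(1/2-e))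
          \<le> w0*(1/2+e) * A False (hX \<sigma>) + w1*(1/2-e) * A True (hX \<sigma>)"
        using IH[of "w0*(1/2+e)" "w1*(1/2-e)"] w0 w1 e0 e1 by simp
      have ihY: "(w0*(1/2-e)+w1*(1/2+e))*real n*(7/2-e) + gn * H (w0*(1/2-e)) (w1*(1/2+e))
          \<le> w0*(1/2-e) * A False (hY \<sigma>) + w1*(1/2+e) * A True (hY \<sigma>)"
        using IH[of "w0*(1/2-e)" "w1*(1/2+e)"] w0 w1 e0 e1 by simp
      have sp: "(1 - 4*e^2) * H w0 w1 \<le> H (w0*(1/2+e)) (w1*(1/2-e)) + H (w0*(1/2-e)) (w1*(1/2+e))"
        using H_split[OF w0 w1 e0] e1 by simp
      have sp2: "gn * ((1 - 4*e^2) * H w0 w1) \<le> gn * (H (w0*(1/2+e)) (w1*(1/2-e)) + H (w0*(1/2-e)) (w1*(1/2+e)))"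
        using sp gn0 by (simp add: mult_left_mono)
      have dd: "(gs - gn) * H w0 w1 \<le> 2*e * H w0 w1" using gd Hb by (simp add: mult_right_mono)
      have g4: "4*e^2*gn * H w0 w1 \<le> 1 * H w0 w1"
      proof (rule mult_right_mono)
        have "4*e^2*gn \<le> 4*e^2*G" using gn0 by (simp add: mult_left_mono)
        then show "4*e^2*gn \<le> 1" using G1 by simp
      qed (use Hb in simp)
      have h4: "(2*e+1) * H w0 w1 \<le> (2*e+1) * ((w0+w1)/4)" using Hb e0 by (simp add: mult_left_mono)
      have we: "(2*e+1) * ((w0+w1)/4) \<le> (w0+w1)*(1/2-e)"
      proof -
        have "(2*e+1)/4 \<le> 1/2-e" using e1 by simp
        then have "(w0+w1)*((2*e+1)/4) \<le> (w0+w1)*(1/2-e)" by (rule mult_left_mono) (use w0 w1 in simp)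
        moreover have "(2*e+1) * ((w0+w1)/4) = (w0+w1)*((2*e+1)/4)" by simp
        ultimately show ?thesis by linarith
      qed
      have cost: "(w0+w1)*(4-2*e) \<le>
          w0*((1/2+e)*SumLoss 3 \<sigma> XX + (1/2-e)*SumLoss 3 \<sigma> YY)
        + w1*((1/2-e)*SumLoss 3 \<sigma> XX + (1/2+e)*SumLoss 3 \<sigma> YY)"
      proof -
        have ew: "0 \<le> e*w0" "0 \<le> e*w1" using e0 w0 w1 by simp_all
        have c: "(\<sigma> 1, \<sigma> 2, \<sigma> 3) \<in> {(2,1,3),(2,3,1),(3,1,2),(3,2,1)}"
          using rank_cases[OF s] False by auto
        then show ?thesis unfolding SL_X SL_Y using ew w0 w1 e1
          by (auto simp: algebra_simps)
      qed
      have "w0 * F False \<sigma> + w1 * F True \<sigma> =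
          w0*((1/2+e)*SumLoss 3 \<sigma> XX + (1/2-e)*SumLoss 3 \<sigma> YY)
        + w1*((1/2-e)*SumLoss 3 \<sigma> XX + (1/2+e)*SumLoss 3 \<sigma> YY)
        + (w0*(1/2+e) * A False (hX \<sigma>) + w1*(1/2-e) * A True (hX \<sigma>))
        + (w0*(1/2-e) * A False (hY \<sigma>) + w1*(1/2+e) * A True (hY \<sigma>))"
        unfolding F_def qX_def qY_def by (simp add: algebra_simps)
      moreover have "R0 = (w0+w1)*(real n+1)*(7/2-e) + gs*H w0 w1" by (simp add: R0_def)
      ultimately show ?thesis using combine[OF cost ihX ihY sp2 dd g4 h4 we] by linarith
    qed
    have sub: "set_pmf (L h) \<subseteq> rankings 3" using vl by (simp add: valid_learner_def)
    have rhs: "w0 * Ew e False (Suc n) (exp_loss 3 L h) + w1 * Ew e True (Suc n) (exp_loss 3 L h)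
        = (\<Sum>\<sigma>\<in>rankings 3. pmf (L h) \<sigma> * (w0 * F False \<sigma> + w1 * F True \<sigma>))"
      unfolding exp_step[OF vl] F_def A_def hX_def hY_def
      by (simp add: sum_distrib_left sum.distrib algebra_simps)
    have "R0 = (\<Sum>\<sigma>\<in>rankings 3. pmf (L h) \<sigma> * R0)"
      using sum_pmf_eq_1[OF fin_rank sub] by (simp add: sum_distrib_right[symmetric])
    also have "\<dots> \<le> (\<Sum>\<sigma>\<in>rankings 3. pmf (L h) \<sigma> * (w0 * F False \<sigma> + w1 * F True \<sigma>))"
      by (rule sum_mono) (use per in \<open>simp add: mult_left_mono\<close>)
    finally show "(w0+w1)*real (Suc n)*(7/2-e) + min (2*e*real (Suc n)) G * H w0 w1
       \<le> w0 * Ew e False (Suc n) (exp_loss 3 L h) + w1 * Ew e True (Suc n) (exp_loss 3 L h)"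
      unfolding rhs R0_def gs_def .
  qed
qed



lemma regret_bound:
  assumes vl: "valid_learner 3 L" and e0: "0 \<le> e" and e1: "e \<le> 1/6"
  shows "Ew e b n (exp_loss 3 L []) - real n * (7/2 - e) \<le> Ew e b n (regret 3 L)"
proof -
  define s where "s = (if b then Transposition.transpose (2::nat) 3 else id)"
  have sr: "s \<in> rankings 3" unfolding s_def rankings_def
    by (auto intro: permutes_swap_id permutes_id)
  have vals: "qX e b * SumLoss 3 s XX + qY e b * SumLoss 3 s YY = 7/2 - e"
    unfolding SL_X SL_Y s_def qX_def qY_def by (cases b) (simp_all add: field_simps)
  have "\<And>rs. exp_loss 3 L [] rs \<le> regret 3 L rs + (0 + sum_list (map (SumLoss 3 s) rs))"
  proof -
    fix rs
    have fin: "finite ((\<lambda>\<sigma>. \<Sum>r\<leftarrow>rs. SumLoss 3 \<sigma> r) ` rankings 3)" using fin_rank by simp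
    have "Min ((\<lambda>\<sigma>. \<Sum>r\<leftarrow>rs. SumLoss 3 \<sigma> r) ` rankings 3) \<le> (\<Sum>r\<leftarrow>rs. SumLoss 3 s r)"
      by (rule Min_le[OF fin]) (use sr in auto)
    then show "exp_loss 3 L [] rs \<le> regret 3 L rs + (0 + sum_list (map (SumLoss 3 s) rs))"
      unfolding regret_def by simp
  qed
  then have "Ew e b n (exp_loss 3 L []) \<le> Ew e b n (\<lambda>rs. regret 3 L rs + (0 + sum_list (map (SumLoss 3 s) rs)))"
    using e0 e1 by (intro Ew_mono) auto
  also have "\<dots> = Ew e b n (regret 3 L) + Ew e b n (\<lambda>rs. 0 + sum_list (map (SumLoss 3 s) rs))"
    by (rule Ew_add)
  also have "\<dots> = Ew e b n (regret 3 L) + real n * (7/2 - e)"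
    by (simp only: Ew_sumlist vals)
  finally show ?thesis by simp
qed

theorem corollary1:
  "\<exists>c>0. \<exists>T0::nat. \<forall>T\<ge>T0. \<forall>L. valid_learner 3 L \<longrightarrow>
     (\<exists>rs. length rs = T \<and> (\<forall>r\<in>set rs. relevance_vec 3 r) \<and>
           regret 3 L rs \<ge> c * real T powr (2/3))"
proof (intro exI[of _ "1/16"] conjI exI[of _ "216::nat"] allI impI)
  fix T :: nat and L
  assume T: "216 \<le> T" and vl: "valid_learner 3 L"
  define t where "t = real T powr (1/3)"
  have Tp: "real T > 0" using T by simp
  have tp: "t > 0" using Tp by (simp add: t_def)
  have t3: "t*t*t = real T"
  proof -
    have "t*t*t = real T powr (1/3 + 1/3 + 1/3)" unfolding t_def by (simp only: powr_add)
    then show ?thesis using Tp by simp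
  qed
  have t2: "real T powr (2/3) = t*t"
  proof -
    have "t*t = real T powr (1/3 + 1/3)" unfolding t_def by (simp only: powr_add)
    then show ?thesis by simp
  qed
  have t6: "t \<ge> 6"
  proof (rule ccontr)
    assume "\<not> t \<ge> 6"
    then have "t^3 < 6^3" using tp by (intro power_strict_mono) auto
    then have "real T < 216" using t3 by (simp add: power3_eq_cube)
    then show False using T by simp
  qed
  define e where "e = 1/t"
  define G where "G = t*t/4"
  have e0: "0 \<le> e" and e1: "e \<le> 1/6" using tp t6 by (auto simp: e_def field_simps)
  have G0: "0 \<le> G" by (simp add: G_def)
  have G1: "4*e^2*G \<le> 1" using tp by (simp add: e_def G_def power2_eq_square)
  have gm: "min (2*e*real T) G = G"
  proof -
    have "2*e*real T = 2*(t*t)" using tp t3[symmetric] by (simp add: e_def field_simps)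
    then show ?thesis using tp by (simp add: G_def)
  qed
  have m: "(1/2+1/2)*real T*(7/2-e) + min (2*e*real T) G * H (1/2) (1/2)
       \<le> 1/2 * Ew e False T (exp_loss 3 L []) + 1/2 * Ew e True T (exp_loss 3 L [])"
    using main[OF vl e0 e1 G0 G1, of T, rule_format, of "1/2" "1/2" "[]"] by simp
  have HH: "H (1/2) (1/2) = 1/4" by (simp add: H_def)
  have rF: "Ew e False T (exp_loss 3 L []) - real T * (7/2 - e) \<le> Ew e False T (regret 3 L)"
    using regret_bound[OF vl e0 e1] .
  have rT: "Ew e True T (exp_loss 3 L []) - real T * (7/2 - e) \<le> Ew e True T (regret 3 L)"
    using regret_bound[OF vl e0 e1] .
  have e12: "e \<le> 1/2" using e1 by simp
  define M where "M = Max (regret 3 L ` seqs T)"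
  have MF: "Ew e False T (regret 3 L) \<le> M" unfolding M_def by (rule Ew_le_Max[OF e0 e12])
  have MT: "Ew e True T (regret 3 L) \<le> M" unfolding M_def by (rule Ew_le_Max[OF e0 e12])
  have "M \<in> regret 3 L ` seqs T" unfolding M_def
    by (rule Max_in) (simp_all add: seqs_fin seqs_ne)
  then obtain rs where rs: "rs \<in> seqs T" "regret 3 L rs = M" by blast
  have bound: "t*t/16 \<le> M" using m HH gm rF rT MF MT unfolding G_def by simp
  show "\<exists>rs. length rs = T \<and> (\<forall>r\<in>set rs. relevance_vec 3 r) \<and> 1/16 * real T powr (2/3) \<le> regret 3 L rs"
  proof (intro exI conjI)
    show "length rs = T" using rs by (simp add: seqs_def)
    show "\<forall>r\<in>set rs. relevance_vec 3 r" using rs(1)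
      by (auto simp: seqs_def relevance_vec_def XX_def YY_def)
    show "1/16 * real T powr (2/3) \<le> regret 3 L rs" using rs(2) bound t2 by simp
  qed
qed (simp)

end
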